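(* Let $\mathbb{F}$ be an algebraically closed field (of any characteristic) and let $(\mathcal{O},*,n)$ be the Okubo algebra over $\mathbb{F}$. Let $f\in\mathcal{O}$ be an idempotent, $f*f=f\neq 0$, and define the product $x\cdot y=(f*x)*(y*f)$ on $\mathcal{O}$. Then the linear map \[ \tau:\mathcal{O}\to\mathcal{O},\qquad \tau(x)=f*(f*x), \] is an automorphism of order $3$ of both algebras $(\mathcal{O},* )$ and $(\mathcal{O},\cdot)$ (and it preserves $n$). Moreover, the subalgebra of elements fixed by $\tau$ coincides with the centralizer $\{x\in\mathcal{O}: x*f=f*x\}$ of $f$ in $(\mathcal{O},* )$.
   Context: The Okubo algebra over a field $\mathbb{F}$ is the $8$-dimensional vector space $\mathcal{O}$ with basis $\{x_a: a\in\mathbb{Z}_3^2,\ a\neq(0,0)\}$ and multiplication defined on basis elements as follows: for $a=(i,j)$, $b=(k,l)$, let $\Delta=il-jk\in\mathbb{Z}_3$; if $a+b=(0,0)$ then $x_a*x_b=0$; otherwise $x_a*x_b=x_{a+b}$ if $\Delta=0$, $x_a*x_b=0$ if $\Delta=1$, and $x_a*x_b=-x_{a+b}$ if $\Delta=2$. It carries the quadratic form $n$ with $n(x_a)=0$ for all $a$ and polar form $n(x,y)=n(x+y)-n(x)-n(y)$ given by $n(x_a,x_b)=1$ if $a+b=0$ and $0$ otherwise. (In characteristic $\neq3$ this algebra is isomorphic to $\mathfrak{sl}_3(\mathbb{F})$ with $x*y=\omega xy-\omega^2yx-\frac{\omega-\omega^2}{3}\mathrm{tr}(xy)1$, $\omega$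 a primitive cube root of $1$.) The algebra satisfies $n(x*y)=n(x)n(y)$, $n(x*y,z)=n(x,y*z)$ and $(x*y)*x=x*(y*x)=n(x)y$ for all $x,y,z$. *)

theory Defs
  imports "HOL-Library.Numeral_Type" "HOL-Computational_Algebra.Polynomial"
begin

definition alg_closed :: "'a::field itself \<Rightarrow> bool" where
  "alg_closed _ \<longleftrightarrow> (\<forall>p :: 'a poly. degree p \<ge> 1 \<longrightarrow> (\<exists>x. poly p x = 0))"

text \<open>Elements of the Okubo algebra are coordinate functions on Z_3^2 vanishing at (0,0);
  the coordinate at a is the coefficient of the basis vector x_a.\<close>
type_synonym idx = "3 \<times> 3"

definition iadd :: "idx \<Rightarrow> idx \<Rightarrow> idx" where
  "iadd a b = (fst a + fst b, snd a + snd b)"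

definition ineg :: "idx \<Rightarrow> idx" where
  "ineg a = (- fst a, - snd a)"

definition okubo :: "(idx \<Rightarrow> 'a::field) set" where
  "okubo = {x. x (0, 0) = 0}"

text \<open>Structure constant: x_a * x_b = okubo_coef a b * x_{a+b}.\<close>
definition okubo_coef :: "idx \<Rightarrow> idx \<Rightarrow> 'a::field" where
  "okubo_coef a b =
     (let \<Delta> = fst a * snd b - snd a * fst b in
      if a = (0, 0) \<or> b = (0, 0) \<or> iadd a b = (0, 0) then 0
      else if \<Delta> = 0 then 1 else if \<Delta> = 1 then 0 else -1)"

definition okubo_mult :: "(idx \<Rightarrow> 'a::field) \<Rightarrow> (idx \<Rightarrow> 'a) \<Rightarrow> (idx \<Rightarrow> 'a)" (infixl "\<star>" 70) where
  "x \<star> y = (\<lambda>c. \<Sum>a\<in>UNIV. \<Sum>b\<in>UNIV. if iadd a b = c then okubo_coef a b * x a * y b else 0)"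

text \<open>Quadratic norm: n(x_a)=0, polar form n(x_a,x_b)=1 iff a+b=0. One representative
  of each pair {a,-a}, a \<noteq> 0.\<close>
definition okubo_norm :: "(idx \<Rightarrow> 'a::field) \<Rightarrow> 'a" where
  "okubo_norm x = (\<Sum>a\<in>{(1,0),(0,1),(1,1),(1,2)}. x a * x (ineg a))"

definition vadd :: "(idx \<Rightarrow> 'a::field) \<Rightarrow> (idx \<Rightarrow> 'a) \<Rightarrow> (idx \<Rightarrow> 'a)" where
  "vadd x y = (\<lambda>i. x i + y i)"

definition vscale :: "'a::field \<Rightarrow> (idx \<Rightarrow> 'a) \<Rightarrow> (idx \<Rightarrow> 'a)" where
  "vscale c x = (\<lambda>i. c * x i)"

end

theory Submission
  imports Defs
begin
lemma three_cases: "(x::3) = 0 \<or> x = 1 \<or> x = 2"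
proof (cases x)
  case (of_int z)
  then have "z = 0 \<or> z = 1 \<or> z = 2" by auto
  then show ?thesis using of_int by auto
qed
lemma U3: "(UNIV::3 set) = {0,1,2}"
  using three_cases by auto
lemma Uidx: "(UNIV::idx set) = {0,1,2} \<times> {0,1,2}"
  using U3 by (metis UNIV_Times_UNIV)

definition isub :: "idx \<Rightarrow> idx \<Rightarrow> idx" where
  "isub c a = (fst c - fst a, snd c - snd a)"

lemma mult_eq: "(x \<star> y) c = (\<Sum>a\<in>UNIV. okubo_coef a (isub c a) * x a * y (isub c a))"
proof -
  have "\<And>a b. (iadd a b = c) = (b = isub c a)"
    by (auto simp: iadd_def isub_def prod_eq_iff algebra_simps)
  then show ?thesis unfolding okubo_mult_def
    by (simp add: if_distrib cong: if_cong)
qed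

lemma neg3: "-(1::3) = 2" "-(2::3) = 1" by simp_all

lemma mc: 
  shows "(x \<star> y) (0,0) = 0"
  and "(x \<star> y) (0,1) = x (0,2) * y (0,2) - x (2,0) * y (1,1) - x (2,1) * y (1,0) - x (2,2) * y (1,2)"
  and "(x \<star> y) (0,2) = x (0,1) * y (0,1) - x (1,0) * y (2,2) - x (1,1) * y (2,1) - x (1,2) * y (2,0)"
  and "(x \<star> y) (1,0) = - x (0,1) * y (1,2) - x (1,1) * y (0,2) + x (2,0) * y (2,0) - x (2,1) * y (2,2)"
  and "(x \<star> y) (1,1) = - x (0,1) * y (1,0) - x (1,2) * y (0,2) - x (2,0) * y (2,1) + x (2,2) * y (2,2)"
  and "(x \<star> y) (1,2) = - x (0,1) * y (1,1) - x (1,0) * y (0,2) + x (2,1) * y (2,1) - x (2,2) * y (2,0)"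
  and "(x \<star> y) (2,0) = - x (0,2) * y (2,1) + x (1,0) * y (1,0) - x (1,2) * y (1,1) - x (2,2) * y (0,1)"
  and "(x \<star> y) (2,1) = - x (0,2) * y (2,2) - x (1,1) * y (1,0) + x (1,2) * y (1,2) - x (2,0) * y (0,1)"
  and "(x \<star> y) (2,2) = - x (0,2) * y (2,0) - x (1,0) * y (1,2) + x (1,1) * y (1,1) - x (2,1) * y (0,1)"
  by (simp_all add: mult_eq Uidx okubo_coef_def isub_def iadd_def Let_def neg3)

lemma nrm: "okubo_norm x = x (1,0) * x (2,0) + x (0,1) * x (0,2) + x (1,1) * x (2,2) + x (1,2) * x (2,1)"
  by (simp add: okubo_norm_def ineg_def neg3)

lemma fun9: "(f::idx \<Rightarrow> 'b) = g \<longleftrightarrow> f (0,0) = g (0,0) \<and> f (0,1) = g (0,1) \<and> f (0,2) = g (0,2) \<and>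
  f (1,0) = g (1,0) \<and> f (1,1) = g (1,1) \<and> f (1,2) = g (1,2) \<and> f (2,0) = g (2,0) \<and> f (2,1) = g (2,1) \<and> f (2,2) = g (2,2)"
  (is "_ \<longleftrightarrow> ?R")
proof
  assume ?R
  show "f = g"
  proof
    fix c :: idx
    have "c \<in> {0,1,2} \<times> {0,1,2}" using Uidx by blast
    then show "f c = g c" using \<open>?R\<close> by auto
  qed
qed simp

definition npol :: "(idx \<Rightarrow> 'a::field) \<Rightarrow> (idx \<Rightarrow> 'a) \<Rightarrow> 'a" where
  "npol x y = x (1,0) * y (2,0) + x (2,0) * y (1,0) + x (0,1) * y (0,2) + x (0,2) * y (0,1)
     + x (1,1) * y (2,2) + x (2,2) * y (1,1) + x (1,2) * y (2,1) + x (2,1) * y (1,2)"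

lemma I1: fixes x y :: "idx \<Rightarrow> 'a::field"
  assumes "y (0,0) = 0"
  shows "(x \<star> y) \<star> x = (\<lambda>c. okubo_norm x * y c)"
  unfolding fun9 using assms by (simp add: mc nrm algebra_simps)

lemma I2: fixes x y :: "idx \<Rightarrow> 'a::field"
  assumes "y (0,0) = 0"
  shows "x \<star> (y \<star> x) = (\<lambda>c. okubo_norm x * y c)"
  unfolding fun9 using assms by (simp add: mc nrm algebra_simps)

lemma L1: fixes x y z :: "idx \<Rightarrow> 'a::field"
  assumes "y (0,0) = 0"
  shows "(\<lambda>c. ((x \<star> y) \<star> z) c + ((z \<star> y) \<star> x) c) = (\<lambda>c. npol x z * y c)"
  unfolding fun9 using assms by (simp add: mc npol_def algebra_simps)

lemma L2: fixes x y z :: "idx \<Rightarrow> 'a::field"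
  assumes "y (0,0) = 0"
  shows "(\<lambda>c. (x \<star> (y \<star> z)) c + (z \<star> (y \<star> x)) c) = (\<lambda>c. npol x z * y c)"
  unfolding fun9 using assms by (simp add: mc npol_def algebra_simps)

lemma Aso: "npol (x \<star> y) z = npol x (y \<star> z)"
  by (simp add: mc npol_def algebra_simps)

lemma Mul: "okubo_norm (x \<star> y) = okubo_norm x * okubo_norm y"
  by (simp add: mc nrm algebra_simps)

lemma npol_sym: "npol x y = npol y x"
  by (simp add: npol_def algebra_simps)

lemma npol_self: "npol x x = 2 * okubo_norm x"
  by (simp add: npol_def nrm algebra_simps)

lemma npol_lin: "npol x (\<lambda>c. a * u c - v c) = a * npol x u - npol x v"
  by (simp add: npol_def algebra_simps)

lemma mV: "(x \<star> y) (0,0) = 0" by (simp add: mc)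

lemma linL: "(\<lambda>c. a * u c - v c) \<star> w = (\<lambda>c. a * (u \<star> w) c - (v \<star> w) c)"
  unfolding fun9 by (simp add: mc algebra_simps)

lemma linR: "w \<star> (\<lambda>c. a * u c - v c) = (\<lambda>c. a * (w \<star> u) c - (w \<star> v) c)"
  unfolding fun9 by (simp add: mc algebra_simps)

lemma addR: "w \<star> vadd u v = vadd (w \<star> u) (w \<star> v)"
  unfolding fun9 by (simp add: mc vadd_def algebra_simps)

lemma scR: "w \<star> vscale a u = vscale a (w \<star> u)"
  unfolding fun9 by (simp add: mc vscale_def algebra_simps)


theorem proposition5p2:
  fixes f :: "idx \<Rightarrow> 'a::field"
    and dot :: "(idx \<Rightarrow> 'a) \<Rightarrow> (idx \<Rightarrow> 'a) \<Rightarrow> (idx \<Rightarrow> 'a)"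
    and \<tau> :: "(idx \<Rightarrow> 'a) \<Rightarrow> (idx \<Rightarrow> 'a)"
  assumes "alg_closed TYPE('a)"
    and "f \<in> okubo" and "f \<star> f = f" and "f \<noteq> (\<lambda>_. 0)"
    and "\<And>x y. dot x y = (f \<star> x) \<star> (y \<star> f)"
    and "\<And>x. \<tau> x = f \<star> (f \<star> x)"
  shows "bij_betw \<tau> okubo okubo
    \<and> (\<forall>x\<in>okubo. \<forall>y\<in>okubo. \<tau> (vadd x y) = vadd (\<tau> x) (\<tau> y))
    \<and> (\<forall>c. \<forall>x\<in>okubo. \<tau> (vscale c x) = vscale c (\<tau> x))
    \<and> (\<forall>x\<in>okubo. \<forall>y\<in>okubo. \<tau> (x \<star> y) = \<tau> x \<star> \<tau> y)
    \<and> (\<forall>x\<in>okubo. \<forall>y\<in>okubo. \<tau> (dot x y) = dot (\<tau> x) (\<tau> y))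
    \<and> (\<forall>x\<in>okubo. \<tau> (\<tau> (\<tau> x)) = x)
    \<and> (\<exists>x\<in>okubo. \<tau> x \<noteq> x)
    \<and> (\<forall>x\<in>okubo. okubo_norm (\<tau> x) = okubo_norm x)
    \<and> {x\<in>okubo. \<tau> x = x} = {x\<in>okubo. x \<star> f = f \<star> x}"
proof -
  note tau = assms(6)
  have f0: "f (0,0) = 0" using assms(2) by (simp add: okubo_def)
  have ff: "f \<star> f = f" by (rule assms(3))
  have nf: "okubo_norm f = 1"
  proof -
    have "f = (\<lambda>c. okubo_norm f * f c)" using I1[of f f, OF f0] ff by simp
    moreover have "\<exists>c. f c \<noteq> 0" using assms(4) by (auto simp: fun_eq_iff)
    then obtain c where "f c \<noteq> 0" by blast
    ultimately show ?thesis by (metis mult_cancel_right1)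
  qed
  have Lf: "f \<star> (y \<star> f) = y" if "y (0,0) = 0" for y
    using I2[of y f, OF that] nf by simp
  have Rf: "(f \<star> y) \<star> f = y" if "y (0,0) = 0" for y
    using I1[of y f, OF that] nf by simp
  have T: "\<tau> z = (\<lambda>c. npol f z * f c - (z \<star> f) c)" for z
  proof -
    have "(\<lambda>c. (f \<star> (f \<star> z)) c + (z \<star> (f \<star> f)) c) = (\<lambda>c. npol f z * f c)"
      by (rule L2[where y=f, OF f0])
    then show ?thesis unfolding tau ff fun_eq_iff by (metis add_diff_cancel_right')
  qed
  have T': "(z \<star> f) \<star> f = (\<lambda>c. npol f z * f c - (f \<star> z) c)" for z
  proof -
    have "(\<lambda>c. ((f \<star> f) \<star> z) c + ((z \<star> f) \<star> f) c) = (\<lambda>c. npol f z * f c)"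
      by (rule L1[where y=f, OF f0])
    then show ?thesis unfolding ff fun_eq_iff by (metis add_diff_cancel_left')
  qed
  have tV: "\<tau> x \<in> okubo" for x unfolding tau okubo_def by (simp add: mV)
  have aut: "\<tau> (x \<star> y) = \<tau> x \<star> \<tau> y" if "x (0,0) = 0" "y (0,0) = 0" for x y
  proof -
    define px where "px = npol f x"
    define py where "py = npol f y"
    have e1: "\<tau> x \<star> \<tau> y = (\<lambda>c. px * (py * f c - y c) - (py * ((x \<star> f) \<star> f) c - ((x \<star> f) \<star> (y \<star> f)) c))"
      unfolding T linL linR ff Lf[of y, OF that(2)] px_def py_def ..
    have F2: "((x \<star> f) \<star> (y \<star> f)) c + (((y \<star> f) \<star> f) \<star> x) c = npol x (y \<star> f) * f c" for c
      using fun_cong[OF L1[of f x "y \<star> f", OF f0], of c] by simp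
    have F3: "((y \<star> f) \<star> f) \<star> x = (\<lambda>c. py * (f \<star> x) c - ((f \<star> y) \<star> x) c)"
      unfolding T' linL py_def ..
    have F4: "((f \<star> y) \<star> x) c + ((x \<star> y) \<star> f) c = npol f x * y c" for c
      using fun_cong[OF L1[of y f x, OF that(2)], of c] by simp
    have F5: "npol x (y \<star> f) = npol f (x \<star> y)"
      using Aso[of x y f] npol_sym by metis
    show ?thesis
    proof
      fix c
      have F1: "((x \<star> f) \<star> f) c = px * f c - (f \<star> x) c" unfolding T' px_def by simp
      have F2': "((x \<star> f) \<star> (y \<star> f)) c + (py * (f \<star> x) c - ((f \<star> y) \<star> x) c) = npol f (x \<star> y) * f c"
        using F2[of c] unfolding F3 F5 by simp
      show "\<tau> (x \<star> y) c = (\<tau> x \<star> \<tau> y) c"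
        using F1 F2' F4[of c] unfolding e1 unfolding T px_def
        by algebra
    qed
  qed
  have L3: "f \<star> \<tau> z = (\<lambda>c. npol f z * f c - z c)" if "z (0,0) = 0" for z
    unfolding T linR ff Lf[of z, OF that] ..
  have t3: "\<tau> (\<tau> (\<tau> x)) = x" if "x (0,0) = 0" for x
  proof -
    have "\<tau> (\<tau> (\<tau> x)) = f \<star> \<tau> (f \<star> \<tau> x)"
      by (simp add: tau)
    also have "f \<star> \<tau> x = (\<lambda>c. npol f x * f c - x c)" by (rule L3[of x, OF that])
    finally have "\<tau> (\<tau> (\<tau> x)) = f \<star> \<tau> (\<lambda>c. npol f x * f c - x c)"
      by (simp add: tau)
    also have "\<dots> = (\<lambda>c. npol f (\<lambda>c. npol f x * f c - x c) * f c - (npol f x * f c - x c))"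
      by (rule L3) (simp add: f0 that)
    also have "\<dots> = x"
    proof -
      have "npol f (\<lambda>c. npol f x * f c - x c) = npol f x"
        by (simp add: npol_lin npol_self nf)
      then show ?thesis by (simp add: fun_eq_iff)
    qed
    finally show ?thesis .
  qed
  have part1: "bij_betw \<tau> okubo okubo"
  proof (rule bij_betw_byWitness[where f' = "\<lambda>x. \<tau> (\<tau> x)"])
    show "\<forall>a\<in>okubo. \<tau> (\<tau> (\<tau> a)) = a" using t3 by (simp add: okubo_def)
    show "\<forall>a'\<in>okubo. \<tau> (\<tau> (\<tau> a')) = a'" using t3 by (simp add: okubo_def)
    show "\<tau> ` okubo \<subseteq> okubo" using tV by auto
    show "(\<lambda>x. \<tau> (\<tau> x)) ` okubo \<subseteq> okubo" using tV by auto
  qed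
  have part2: "\<forall>x\<in>okubo. \<forall>y\<in>okubo. \<tau> (vadd x y) = vadd (\<tau> x) (\<tau> y)"
    by (simp add: tau addR)
  have part3: "\<forall>c. \<forall>x\<in>okubo. \<tau> (vscale c x) = vscale c (\<tau> x)"
    by (simp add: tau scR)
  have part4: "\<forall>x\<in>okubo. \<forall>y\<in>okubo. \<tau> (x \<star> y) = \<tau> x \<star> \<tau> y"
    using aut by (simp add: okubo_def)
  have tf: "\<tau> f = f" by (simp add: tau ff)
  have part5: "\<forall>x\<in>okubo. \<forall>y\<in>okubo. \<tau> (dot x y) = dot (\<tau> x) (\<tau> y)"
  proof (intro ballI)
    fix x y :: "idx \<Rightarrow> 'a" assume "x \<in> okubo" "y \<in> okubo"
    then have x0: "x (0,0) = 0" and y0: "y (0,0) = 0" by (auto simp: okubo_def)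
    have "\<tau> (dot x y) = \<tau> (f \<star> x) \<star> \<tau> (y \<star> f)"
      unfolding assms(5) by (rule aut; simp add: mV)
    also have "\<tau> (f \<star> x) = f \<star> \<tau> x" using aut[of f x, OF f0 x0] tf by simp
    also have "\<tau> (y \<star> f) = \<tau> y \<star> f" using aut[of y f, OF y0 f0] tf by simp
    finally show "\<tau> (dot x y) = dot (\<tau> x) (\<tau> y)" unfolding assms(5) .
  qed
  have part7: "\<exists>x\<in>okubo. \<tau> x \<noteq> x"
  proof (rule ccontr)
    assume "\<not> ?thesis"
    then have fixd: "\<tau> x = x" if "x (0,0) = 0" for x using that by (auto simp: okubo_def)
    have C: "f \<star> z = (\<lambda>c. npol f z * f c - z c)" if "z (0,0) = 0" for z
      using L3[of z, OF that] fixd[of z, OF that] by simp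
    define d1 :: "idx \<Rightarrow> 'a" where "d1 = (\<lambda>c. if c = (1,0) then 1 else 0)"
    define d2 :: "idx \<Rightarrow> 'a" where "d2 = (\<lambda>c. if c = (0,1) then 1 else 0)"
    have "d1 (0,0) = 0" "d2 (0,0) = 0" by (simp_all add: d1_def d2_def)
    from C[of d1, OF this(1)] have a: "(f \<star> d1) (1,0) = npol f d1 * f (1,0) - d1 (1,0)"
      and b: "(f \<star> d1) (0,2) = npol f d1 * f (0,2) - d1 (0,2)" by simp_all
    from C[of d2, OF \<open>d2 (0,0) = 0\<close>] have c: "(f \<star> d2) (0,1) = npol f d2 * f (0,1) - d2 (0,1)" by simp
    have a': "f (2,0) * f (1,0) = 1" using a by (simp add: mc npol_def d1_def)
    have b': "f (2,0) * f (0,2) = 0" using b by (simp add: mc npol_def d1_def)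
    have c': "f (0,2) * f (0,1) = 1" using c by (simp add: mc npol_def d2_def)
    from a' c' b' show False by (metis mult_zero_left mult_zero_right no_zero_divisors zero_neq_one)
  qed
  have part8: "\<forall>x\<in>okubo. okubo_norm (\<tau> x) = okubo_norm x"
    by (simp add: tau Mul nf)
  have part9: "{x\<in>okubo. \<tau> x = x} = {x\<in>okubo. x \<star> f = f \<star> x}"
  proof (intro set_eqI iffI)
    fix x assume "x \<in> {x\<in>okubo. \<tau> x = x}"
    then have x0: "x (0,0) = 0" and tx: "f \<star> (f \<star> x) = x" by (auto simp: okubo_def tau)
    have "x \<star> f = (f \<star> (f \<star> x)) \<star> f" using tx by simp
    also have "\<dots> = f \<star> x" by (rule Rf) (simp add: mV)
    finally show "x \<in> {x\<in>okubo. x \<star> f = f \<star> x}" using x0 by (simp add: okubo_def)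
  next
    fix x assume "x \<in> {x\<in>okubo. x \<star> f = f \<star> x}"
    then have x0: "x (0,0) = 0" and cx: "x \<star> f = f \<star> x" by (auto simp: okubo_def)
    have "\<tau> x = f \<star> (x \<star> f)" using cx by (simp add: tau)
    also have "\<dots> = x" by (rule Lf[of x, OF x0])
    finally show "x \<in> {x\<in>okubo. \<tau> x = x}" using x0 by (simp add: okubo_def)
  qed
  show ?thesis using part1 part2 part3 part4 part5 t3 part7 part8 part9
    by (simp add: okubo_def)
qed

end
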